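(* For every integer $n\ge1$, \[ (3n-1)\,x\,p_{n-1}(x)=2n\,q_n(x)+(2n-1)\,q_{n-1}(x), \] and for every integer $n\ge2$, \[ (3n-2)\,x\,q_{n-1}(x)=\tfrac23\bigl(n\,p_n(x)+(2n-1)\,p_{n-1}(x)+(n-1)\,p_{n-2}(x)\bigr). \]
   Context: Pochhammer symbol: $(a)_0=1$, $(a)_n=a(a+1)\cdots(a+n-1)$; for real $a$ and integer $n\ge0$, $\binom{n+a}{n}:=\frac{(a+1)_n}{n!}$. Define $p_n(x)=\sum_{k=0}^n\binom nk\binom{n+\frac k2}{n}(-1)^{n-k}x^k$ and $q_n(x)=\sum_{k=0}^n\binom nk\binom{n+\frac{k-1}2}{n}(-1)^{n-k}x^k$. *)

theory Defs
  imports Complex_Main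
begin

text \<open>Generalized binomial: binom(n+a, n) := (a+1)_n / n! for real a.\<close>
definition gbinom :: "nat \<Rightarrow> real \<Rightarrow> real" where
  "gbinom n a = pochhammer (a + 1) n / fact n"

definition p_poly :: "nat \<Rightarrow> real \<Rightarrow> real" where
  "p_poly n x = (\<Sum>k=0..n. real (n choose k) * gbinom n (real k / 2) * (-1) ^ (n - k) * x ^ k)"

definition q_poly :: "nat \<Rightarrow> real \<Rightarrow> real" where
  "q_poly n x = (\<Sum>k=0..n. real (n choose k) * gbinom n ((real k - 1) / 2) * (-1) ^ (n - k) * x ^ k)"

end

theory Submission
  imports Defs
begin

definition pc :: "nat \<Rightarrow> nat \<Rightarrow> real" where
  "pc n k = real (n choose k) * gbinom n (real k / 2) * (-1) ^ (n + k)"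
definition qc :: "nat \<Rightarrow> nat \<Rightarrow> real" where
  "qc n k = real (n choose k) * gbinom n ((real k - 1) / 2) * (-1) ^ (n + k)"

lemma sign_eq: "k \<le> n \<Longrightarrow> (-1::real) ^ (n - k) = (-1) ^ (n + k)"
proof -
  assume "k \<le> n"
  then obtain d where d: "n = k + d" using le_Suc_ex by blast
  have "(-1::real) ^ (d + 2 * k) = (-1) ^ d" by (simp add: power_add power_mult)
  moreover have "d + 2 * k = n + k" using d by simp
  ultimately show ?thesis using d by simp
qed

lemma p_alt: "p_poly n x = (\<Sum>k=0..n. pc n k * x ^ k)"
  unfolding p_poly_def pc_def by (rule sum.cong) (auto simp: sign_eq)
lemma q_alt: "q_poly n x = (\<Sum>k=0..n. qc n k * x ^ k)"
  unfolding q_poly_def qc_def by (rule sum.cong) (auto simp: sign_eq)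

lemma p_ext: "n \<le> N \<Longrightarrow> p_poly n x = (\<Sum>k=0..N. pc n k * x ^ k)"
  unfolding p_alt by (rule sum.mono_neutral_left) (auto simp: pc_def)
lemma q_ext: "n \<le> N \<Longrightarrow> q_poly n x = (\<Sum>k=0..N. qc n k * x ^ k)"
  unfolding q_alt by (rule sum.mono_neutral_left) (auto simp: qc_def)

lemma p_shift: "n \<le> Suc N \<Longrightarrow> p_poly n x = pc n 0 + (\<Sum>k=0..N. pc n (Suc k) * x ^ Suc k)"
  by (simp add: p_ext[of n "Suc N"] sum.atLeast0_atMost_Suc_shift del: sum.cl_ivl_Suc)
lemma q_shift: "n \<le> Suc N \<Longrightarrow> q_poly n x = qc n 0 + (\<Sum>k=0..N. qc n (Suc k) * x ^ Suc k)"
  by (simp add: q_ext[of n "Suc N"] sum.atLeast0_atMost_Suc_shift del: sum.cl_ivl_Suc)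

lemma xp: "x * p_poly n x = (\<Sum>k=0..n. pc n k * x ^ Suc k)"
  by (simp add: p_alt sum_distrib_left algebra_simps)
lemma xq: "x * q_poly n x = (\<Sum>k=0..n. qc n k * x ^ Suc k)"
  by (simp add: q_alt sum_distrib_left algebra_simps)

lemma gsuc: "gbinom (Suc n) a = gbinom n a * (a + 1 + real n) / real (Suc n)"
  unfolding gbinom_def by (simp add: pochhammer_rec' field_simps)
lemma gup: "gbinom n (a + 1) * (a + 1) = gbinom (Suc n) a * real (Suc n)"
proof -
  have "pochhammer (a+1) (Suc n) = (a+1) * pochhammer (a+2) n"
    by (simp add: pochhammer_rec add_ac)
  moreover have "gbinom (Suc n) a * real (Suc n) = pochhammer (a+1) (Suc n) / fact n"
    unfolding gbinom_def fact_Suc by (simp del: of_nat_Suc)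
  ultimately show ?thesis unfolding gbinom_def by (simp add: add.commute)
qed

lemma chooseR: "real (Suc n choose Suc k) = real (n choose k) + real (n choose Suc k)"
  by simp
lemma chooseS: "real (Suc n) * real (n choose k) = real (Suc n choose Suc k) * real (Suc k)"
  by (metis Suc_times_binomial_eq of_nat_mult)

lemma coef1: "(3 * real (Suc m) - 1) * pc m k
   = 2 * real (Suc m) * qc (Suc m) (Suc k) + (2 * real (Suc m) - 1) * qc m (Suc k)"
proof -
  define G where "G = gbinom m (real k / 2)"
  define s where "s = (-1::real)^(m+k)"
  define c where "c = real (m choose k)"
  define b where "b = real (Suc m choose Suc k)"
  define e where "e = real (m choose Suc k)"
  have h1: "pc m k = c*G*s" by (simp add: pc_def c_def G_def s_def)
  have h2: "qc (Suc m) (Suc k) = b * (G*(real k/2 + 1 + real m)/real(Suc m)) * s"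
    by (simp add: qc_def gsuc b_def G_def s_def)
  have h3: "qc m (Suc k) = - (e*G*s)"
    by (simp add: qc_def e_def G_def s_def)
  have r1: "b = c + e" unfolding b_def c_def e_def by simp
  have r2: "real(Suc m) * c = b * real(Suc k)" unfolding b_def c_def using chooseS by blast
  have "e = b - c" using r1 by simp
  show ?thesis unfolding h1 h2 h3 \<open>e = b - c\<close>
    using r2 by (simp add: field_simps) algebra
qed


lemma alg:
  fixes u M1 N H c t b d e f X0 X1 X2 :: real
  assumes u0: "u > 0" and M1: "M1 > 0" and N: "N > 0" and hN: "N = M1 + 1"
   and "X2 = H*(u+M1)*(u+N)/N/u" "X1 = H*(u+M1)/u" "X0 = H*M1/u"
   "b = N*c/(2*u)" "d = b - c" "f = d*(2*u)/M1" "e = d - f"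
  shows "(3*N-2)*(-(c*H*t)) = 2/3*(N*(-(b*X2*t)) + (2*N-1)*(d*X1*t) + (N-1)*(-(e*X0*t)))"
proof -
  have "(3*N-2)*(-(c*H*t)) * (3*N*u*u*M1) = 2/3*(N*(-(b*X2*t)) + (2*N-1)*(d*X1*t) + (N-1)*(-(e*X0*t))) * (3*N*u*u*M1)"
    unfolding assms(5-11) using u0 M1 N by (simp add: field_simps) (simp add: algebra_simps hN)
  moreover have "3*N*u*u*M1 \<noteq> 0" using u0 M1 N by simp
  ultimately show ?thesis using mult_right_cancel by blast
qed

lemma coef2: "(3 * real (Suc (Suc m)) - 2) * qc (Suc m) k
   = 2 / 3 * (real (Suc (Suc m)) * pc (Suc (Suc m)) (Suc k) + (2 * real (Suc (Suc m)) - 1) * pc (Suc m) (Suc k)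
              + (real (Suc (Suc m)) - 1) * pc m (Suc k))"
proof -
  define u where "u = (real k + 1) / 2"
  have u0: "u > 0" unfolding u_def by simp
  have ua: "(real k - 1) / 2 = u - 1" unfolding u_def by (simp add: field_simps)
  have uu: "real (Suc k) / 2 = u - 1 + 1" unfolding u_def by (simp add: field_simps)
  have uu2: "(1 + real k) / 2 = u" unfolding u_def by simp
  define H where "H = gbinom (Suc m) (u - 1)"
  define t where "t = (-1::real)^(m+k)"
  define c where "c = real (Suc m choose k)"
  define b where "b = real (Suc (Suc m) choose Suc k)"
  define d where "d = real (Suc m choose Suc k)"
  define e where "e = real (m choose Suc k)"
  define f where "f = real (m choose k)"
  define X2 where "X2 = gbinom (Suc (Suc m)) (u - 1 + 1)"
  define X1 where "X1 = gbinom (Suc m) (u - 1 + 1)"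
  define X0 where "X0 = gbinom m (u - 1 + 1)"
  have g2: "gbinom (Suc (Suc m)) (u - 1) = H * (u + real (Suc m)) / real (Suc (Suc m))"
    unfolding H_def by (subst gsuc) (simp add: field_simps)
  have g3: "gbinom (Suc (Suc (Suc m))) (u - 1) = gbinom (Suc (Suc m)) (u - 1) * (u + real (Suc (Suc m))) / real (Suc (Suc (Suc m)))"
    by (subst gsuc) (simp add: field_simps)
  have x2: "X2 * u = H * (u + real (Suc m)) * (u + real (Suc (Suc m))) / real (Suc (Suc m))"
  proof -
    have "X2 * u = gbinom (Suc (Suc (Suc m))) (u - 1) * real (Suc (Suc (Suc m)))"
      using gup[of "Suc (Suc m)" "u - 1"] unfolding X2_def by simp
    also have "\<dots> = gbinom (Suc (Suc m)) (u - 1) * (u + real (Suc (Suc m)))"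
      unfolding g3 by (simp del: of_nat_Suc)
    also have "\<dots> = H * (u + real (Suc m)) * (u + real (Suc (Suc m))) / real (Suc (Suc m))"
      unfolding g2 by simp
    finally show ?thesis .
  qed
  have x1: "X1 * u = H * (u + real (Suc m))"
  proof -
    have "X1 * u = gbinom (Suc (Suc m)) (u - 1) * real (Suc (Suc m))"
      using gup[of "Suc m" "u - 1"] unfolding X1_def by simp
    also have "\<dots> = H * (u + real (Suc m))"
      unfolding g2 by (simp del: of_nat_Suc)
    finally show ?thesis .
  qed
  have x0: "X0 * u = H * real (Suc m)"
    using gup[of "m" "u - 1"] unfolding X0_def H_def by (simp add: field_simps)
  have hq: "qc (Suc m) k = - (c * H * t)"
    by (simp add: qc_def c_def H_def t_def ua)
  have hp2: "pc (Suc (Suc m)) (Suc k) = - (b * X2 * t)"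
    by (simp add: pc_def b_def X2_def t_def uu uu2)
  have hp1: "pc (Suc m) (Suc k) = d * X1 * t"
    by (simp add: pc_def d_def X1_def t_def uu uu2)
  have hp0: "pc m (Suc k) = - (e * X0 * t)"
    by (simp add: pc_def e_def X0_def t_def uu uu2)
  have r1: "b = c + d" unfolding b_def c_def d_def by simp
  have r2: "real (Suc (Suc m)) * c = b * real (Suc k)" unfolding b_def c_def using chooseS by blast
  have r3: "d = f + e" unfolding d_def e_def f_def by simp
  have r4: "real (Suc m) * f = d * real (Suc k)" unfolding d_def f_def using chooseS by blast
  have ku: "real k = 2 * u - 1" unfolding u_def by (simp add: field_simps)
  have sk: "real (Suc k) = 2 * u" unfolding u_def by simp
  have eb: "b = real (Suc (Suc m)) * c / (2 * u)" using r2 u0 unfolding sk by (simp add: field_simps)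
  have ed: "d = b - c" using r1 by simp
  have ef: "f = d * (2 * u) / real (Suc m)" using r4 unfolding sk by (simp add: field_simps)
  have ee: "e = d - f" using r3 by simp
  have X2e: "X2 = H * (u + real (Suc m)) * (u + real (Suc (Suc m))) / real (Suc (Suc m)) / u"
    using u0 by (subst x2[symmetric]) (simp del: X2_def)
  have X1e: "X1 = H * (u + real (Suc m)) / u" using u0 by (subst x1[symmetric]) (simp del: X1_def)
  have X0e: "X0 = H * real (Suc m) / u" using u0 by (subst x0[symmetric]) (simp del: X0_def)
  show ?thesis unfolding hq hp2 hp1 hp0
    by (rule alg[OF u0 _ _ _ X2e X1e X0e eb ed ef ee]) auto
qed


lemma z1: "2 * real (Suc m) * qc (Suc m) 0 + (2 * real (Suc m) - 1) * qc m 0 = 0"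
  by (simp add: qc_def gsuc field_simps)

lemma g0: "gbinom n 0 = 1"
  by (simp add: gbinom_def pochhammer_fact[symmetric])

lemma z2: "real (Suc (Suc m)) * pc (Suc (Suc m)) 0 + (2 * real (Suc (Suc m)) - 1) * pc (Suc m) 0
   + (real (Suc (Suc m)) - 1) * pc m 0 = 0"
  by (simp add: pc_def g0 algebra_simps)

lemma part1: "(3 * real (Suc m) - 1) * x * p_poly m x
   = 2 * real (Suc m) * q_poly (Suc m) x + (2 * real (Suc m) - 1) * q_poly m x"
proof -
  let ?n = "real (Suc m)"
  have "2 * ?n * q_poly (Suc m) x + (2 * ?n - 1) * q_poly m x
     = 2 * ?n * (qc (Suc m) 0 + (\<Sum>k=0..m. qc (Suc m) (Suc k) * x ^ Suc k))
       + (2 * ?n - 1) * (qc m 0 + (\<Sum>k=0..m. qc m (Suc k) * x ^ Suc k))"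
    by (simp add: q_shift[of "Suc m" m] q_shift[of m m])
  also have "\<dots> = (2 * ?n * qc (Suc m) 0 + (2 * ?n - 1) * qc m 0)
       + (\<Sum>k=0..m. (2 * ?n * qc (Suc m) (Suc k) + (2 * ?n - 1) * qc m (Suc k)) * x ^ Suc k)"
    by (simp add: sum_distrib_left sum.distrib algebra_simps)
  also have "\<dots> = (\<Sum>k=0..m. ((3 * ?n - 1) * pc m k) * x ^ Suc k)"
    by (simp only: z1 coef1 add_0)
  also have "\<dots> = (3 * ?n - 1) * (\<Sum>k=0..m. pc m k * x ^ Suc k)"
    by (simp add: sum_distrib_left mult.assoc)
  also have "\<dots> = (3 * ?n - 1) * x * p_poly m x"
    by (simp only: xp[symmetric] mult.assoc)
  finally show ?thesis by simp
qed

lemma part2: "(3 * real (Suc (Suc m)) - 2) * x * q_poly (Suc m) x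
   = 2 / 3 * (real (Suc (Suc m)) * p_poly (Suc (Suc m)) x + (2 * real (Suc (Suc m)) - 1) * p_poly (Suc m) x
              + (real (Suc (Suc m)) - 1) * p_poly m x)"
proof -
  let ?n = "real (Suc (Suc m))"
  have "?n * p_poly (Suc (Suc m)) x + (2 * ?n - 1) * p_poly (Suc m) x + (?n - 1) * p_poly m x
     = ?n * (pc (Suc (Suc m)) 0 + (\<Sum>k=0..Suc m. pc (Suc (Suc m)) (Suc k) * x ^ Suc k))
       + (2 * ?n - 1) * (pc (Suc m) 0 + (\<Sum>k=0..Suc m. pc (Suc m) (Suc k) * x ^ Suc k))
       + (?n - 1) * (pc m 0 + (\<Sum>k=0..Suc m. pc m (Suc k) * x ^ Suc k))"
    by (simp only: p_shift[of "Suc (Suc m)" "Suc m", OF le_refl] p_shift[of "Suc m" "Suc m", OF le_SucI[OF le_refl]] p_shift[of m "Suc m", OF le_SucI[OF le_SucI[OF le_refl]]])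
  also have "\<dots> = (?n * pc (Suc (Suc m)) 0 + (2 * ?n - 1) * pc (Suc m) 0 + (?n - 1) * pc m 0)
       + (\<Sum>k=0..Suc m. (?n * pc (Suc (Suc m)) (Suc k) + (2 * ?n - 1) * pc (Suc m) (Suc k)
            + (?n - 1) * pc m (Suc k)) * x ^ Suc k)"
    by (simp add: sum_distrib_left sum.distrib algebra_simps)
  also have "\<dots> = (\<Sum>k=0..Suc m. (3 / 2 * ((3 * ?n - 2) * qc (Suc m) k)) * x ^ Suc k)"
    apply (simp only: z2 add_0)
    apply (rule sum.cong[OF refl])
    apply (subst coef2)
    apply simp
    done
  finally have "?n * p_poly (Suc (Suc m)) x + (2 * ?n - 1) * p_poly (Suc m) x + (?n - 1) * p_poly m x
     = 3 / 2 * ((3 * ?n - 2) * (x * q_poly (Suc m) x))"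
    by (simp add: xq sum_distrib_left algebra_simps)
  then show ?thesis by simp
qed

theorem mainTheorem8:
  fixes x :: real
  shows "(\<forall>n::nat. n \<ge> 1 \<longrightarrow>
            (3 * real n - 1) * x * p_poly (n - 1) x
              = 2 * real n * q_poly n x + (2 * real n - 1) * q_poly (n - 1) x)
       \<and> (\<forall>n::nat. n \<ge> 2 \<longrightarrow>
            (3 * real n - 2) * x * q_poly (n - 1) x
              = 2 / 3 * (real n * p_poly n x + (2 * real n - 1) * p_poly (n - 1) x
                         + (real n - 1) * p_poly (n - 2) x))"
proof (intro conjI allI impI)
  fix n :: nat assume "n \<ge> 1"
  then obtain m where "n = Suc m" by (cases n) auto
  then show "(3 * real n - 1) * x * p_poly (n - 1) x
              = 2 * real n * q_poly n x + (2 * real n - 1) * q_poly (n - 1) x"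
    using part1[of m x] by simp
next
  fix n :: nat assume "n \<ge> 2"
  then obtain m where "n = Suc (Suc m)" by (metis add_2_eq_Suc le_Suc_ex)
  then show "(3 * real n - 2) * x * q_poly (n - 1) x
              = 2 / 3 * (real n * p_poly n x + (2 * real n - 1) * p_poly (n - 1) x
                         + (real n - 1) * p_poly (n - 2) x)"
    using part2[of m x] by (simp only: diff_Suc_1 diff_Suc_Suc diff_zero numeral_2_eq_2 mult.assoc)
qed

end
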